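(* Let $a,b,c$ be the vertices of a nondegenerate triangle in $\mathbb{R}^2$, and let $d$ be a point of the closed triangle $\triangle abc$ not lying on the line $ab$. Let $e$ and $f$ be the intersections of the line through $d$ parallel to $ab$ with the segments $ac$ and $bc$ respectively. Then the area of the triangle $\triangle abd$ (the discarded region) is larger than the area of $\triangle ade \cup \triangle bdf$ (the preserved region).
   Context: This describes one step of QuickHull on a planar set: $ab$ is an edge of the current partial hull, $c$ is the intersection of the lines through $a$ and $b$ beyond which no input point lies (so remaining candidate points lie in $\triangle abc$), $d$ is the point farthest from line $ab$ on the outer side, which is inserted into the partial hull; points in $\triangle abd$ are then discarded, while the points in $\triangle ade$ and $\triangle bdf$ are preserved for later steps. *)

theory Defs
  imports "HOL-Analysis.Analysis"
begin

end

theory Submission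
  imports Defs
begin

definition cr :: "real^2 \<Rightarrow> real^2 \<Rightarrow> real" where
  "cr x y = x$1 * y$2 - y$1 * x$2"

lemma tri_area:
  fixes A B C :: "real^2"
  shows "measure lebesgue (convex hull {A, B, C}) = \<bar>cr (C - A) (B - A)\<bar> / 2"
proof -
  have "compact (convex hull {A, B, C})"
    by (intro finite_imp_compact_convex_hull) auto
  then have "convex hull {A, B, C} \<in> sets lborel"
    by (auto dest: compact_imp_closed)
  then have "measure lebesgue (convex hull {A, B, C}) = measure lborel (convex hull {A, B, C})"
    by simp
  also have "\<dots> = \<bar>cr (C - A) (B - A)\<bar> / 2"
    by (simp add: content_triangle cr_def)
  finally show ?thesis .
qed

lemma cr_ne0:
  fixes a b c :: "real^2"
  assumes "\<not> collinear {a, b, c}"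
  shows "cr (c - a) (b - a) \<noteq> 0"
proof
  assume K: "cr (c - a) (b - a) = 0"
  have "collinear {0, b - a, c - a}"
  proof -
    have "b - a = 0 \<or> c - a = 0 \<or> (\<exists>l. c - a = l *\<^sub>R (b - a))"
    proof (cases "b - a = 0")
      case False
      then have "(b-a)$1 \<noteq> 0 \<or> (b-a)$2 \<noteq> 0"
        by (metis (full_types) exhaust_2 vec_eq_iff zero_index)
      then show ?thesis
      proof
        assume h: "(b-a)$1 \<noteq> 0"
        have e1: "(c-a)$1 = ((c-a)$1 / (b-a)$1) * (b-a)$1" using h by simp
        have e2: "(c-a)$2 = ((c-a)$1 / (b-a)$1) * (b-a)$2" using h K unfolding cr_def
          by (simp add: field_simps)
        have "c - a = ((c-a)$1 / (b-a)$1) *\<^sub>R (b - a)"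
          unfolding vec_eq_iff forall_2 using e1 e2 by simp
        then show ?thesis by blast
      next
        assume h: "(b-a)$2 \<noteq> 0"
        have e1: "(c-a)$2 = ((c-a)$2 / (b-a)$2) * (b-a)$2" using h by simp
        have e2: "(c-a)$1 = ((c-a)$2 / (b-a)$2) * (b-a)$1" using h K unfolding cr_def
          by (simp add: field_simps)
        have "c - a = ((c-a)$2 / (b-a)$2) *\<^sub>R (b - a)"
          unfolding vec_eq_iff forall_2 using e1 e2 by simp
        then show ?thesis by blast
      qed
    qed simp
    then show ?thesis by (simp add: collinear_lemma)
  qed
  then have "collinear {b, a, c}"
    by (subst collinear_3) (simp add: insert_commute)
  then show False using assms by (simp add: insert_commute)
qed


theorem lemma1:
  fixes a b c d e f :: "real^2"
  assumes nondeg: "\<not> collinear {a, b, c}"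
    and d_in: "d \<in> convex hull {a, b, c}"
    and d_off: "d \<notin> affine hull {a, b}"
    and e_seg: "e \<in> closed_segment a c" and e_line: "\<exists>t::real. e = d + t *\<^sub>R (b - a)"
    and f_seg: "f \<in> closed_segment b c" and f_line: "\<exists>t::real. f = d + t *\<^sub>R (b - a)"
  shows "measure lebesgue (convex hull {a, d, e} \<union> convex hull {b, d, f})
           < measure lebesgue (convex hull {a, b, d})"
proof -
  obtain al be ga where abg: "0 \<le> al" "0 \<le> be" "0 \<le> ga" "al + be + ga = 1"
    and dd: "d = al *\<^sub>R a + be *\<^sub>R b + ga *\<^sub>R c"
    using d_in unfolding convex_hull_3 by blast
  have gpos: "ga > 0"
  proof (rule ccontr)
    assume "\<not> ga > 0"
    then have "ga = 0" using abg by simp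
    then have "d \<in> affine hull {a, b}" unfolding affine_hull_2 using dd abg by auto
    then show False using d_off by simp
  qed
  obtain t where et: "e = d + t *\<^sub>R (b - a)" using e_line by blast
  obtain s where fs: "f = d + s *\<^sub>R (b - a)" using f_line by blast
  obtain u where eu: "e = (1 - u) *\<^sub>R a + u *\<^sub>R c" using e_seg unfolding in_segment by blast
  obtain v where fv: "f = (1 - v) *\<^sub>R b + v *\<^sub>R c" using f_seg unfolding in_segment by blast
  define K where "K = cr (c - a) (b - a)"
  have K0: "K \<noteq> 0" unfolding K_def using cr_ne0[OF nondeg] .
  have d1: "d$1 = al * a$1 + be * b$1 + ga * c$1" and d2: "d$2 = al * a$2 + be * b$2 + ga * c$2"
    using dd by simp_all
  have e1: "e$1 = d$1 + t * (b$1 - a$1)" and e2: "e$2 = d$2 + t * (b$2 - a$2)"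
    using et by simp_all
  have e1': "e$1 = (1 - u) * a$1 + u * c$1" and e2': "e$2 = (1 - u) * a$2 + u * c$2"
    using eu by simp_all
  have f1: "f$1 = d$1 + s * (b$1 - a$1)" and f2: "f$2 = d$2 + s * (b$2 - a$2)"
    using fs by simp_all
  have f1': "f$1 = (1 - v) * b$1 + v * c$1" and f2': "f$2 = (1 - v) * b$2 + v * c$2"
    using fv by simp_all
  have al: "al = 1 - be - ga" using abg by simp
  have "(be + t) * K = 0"
    unfolding K_def cr_def vector_minus_component using d1 d2 e1 e2 e1' e2' al by algebra
  then have tb: "t = - be" using K0 by simp
  have "(s - al) * K = 0"
    unfolding K_def cr_def vector_minus_component using d1 d2 f1 f2 f1' f2' al by algebra
  then have sa: "s = al" using K0 by simp
  have A1: "measure lebesgue (convex hull {a, b, d}) = ga * \<bar>K\<bar> / 2"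
  proof -
    have "cr (d - a) (b - a) = ga * K"
      unfolding K_def cr_def vector_minus_component using d1 d2 al by algebra
    then show ?thesis using tri_area[of a b d] gpos by (simp add: abs_mult)
  qed
  have A2: "measure lebesgue (convex hull {a, d, e}) = be * ga * \<bar>K\<bar> / 2"
  proof -
    have "cr (e - a) (d - a) = be * ga * K"
      unfolding K_def cr_def vector_minus_component using d1 d2 e1 e2 al tb by algebra
    then show ?thesis using tri_area[of a d e] gpos abg by (simp add: abs_mult)
  qed
  have A3: "measure lebesgue (convex hull {b, d, f}) = al * ga * \<bar>K\<bar> / 2"
  proof -
    have "cr (f - b) (d - b) = - al * ga * K"
      unfolding K_def cr_def vector_minus_component using d1 d2 f1 f2 al sa by algebra
    then show ?thesis using tri_area[of b d f] gpos abg by (simp add: abs_mult)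
  qed
  have meas: "convex hull {a, d, e} \<in> sets lebesgue" "convex hull {b, d, f} \<in> sets lebesgue"
    by (auto intro!: sets_completionI_sets borel_closed compact_imp_closed
        finite_imp_compact_convex_hull)
  have "measure lebesgue (convex hull {a, d, e} \<union> convex hull {b, d, f})
        \<le> measure lebesgue (convex hull {a, d, e}) + measure lebesgue (convex hull {b, d, f})"
    by (rule measure_Un_le[OF meas])
  also have "\<dots> = (1 - ga) * (ga * \<bar>K\<bar> / 2)" using A2 A3 al by (simp add: algebra_simps)
  also have "\<dots> < ga * \<bar>K\<bar> / 2" using gpos K0 by (simp add: algebra_simps)
  finally show ?thesis using A1 by simp
qed

end
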